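(* Let $0\to N\xrightarrow{i} G\xrightarrow{p} Q\to 1$ be a short exact sequence of groups with $N$ abelian (written additively), and let $Z^1(G,N)$ be the abelian group (under pointwise addition) of crossed homomorphisms $\phi:G\to N$. With the multiplication $(\phi\diamond\psi)(x):=\phi(i(\psi(x)))$, $Z^1(G,N)$ is an associative (not necessarily unital) ring, and the map $Res:Z^1(G,N)\to End_Q(N)$, $\phi\mapsto\phi\circ i$, is a ring homomorphism.
   Context: $G$ acts on $N$ by conjugation, $x\cdot n=x+n-x$, and a crossed homomorphism satisfies $\phi(x+y)=\phi(x)+x\cdot\phi(y)$. This induces a $Q$-module structure on $N$; $End_Q(N)$ is the ring of $Q$-module endomorphisms of $N$ under pointwise addition and composition. *)

theory Defs
  imports "HOL-Algebra.Coset" "HOL-Algebra.Ring"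
begin

definition rng :: "('a, 'b) ring_scheme \<Rightarrow> bool" where
  "rng R \<longleftrightarrow> abelian_group R \<and>
     (\<forall>x\<in>carrier R. \<forall>y\<in>carrier R. x \<otimes>\<^bsub>R\<^esub> y \<in> carrier R) \<and>
     (\<forall>x\<in>carrier R. \<forall>y\<in>carrier R. \<forall>z\<in>carrier R.
        (x \<otimes>\<^bsub>R\<^esub> y) \<otimes>\<^bsub>R\<^esub> z = x \<otimes>\<^bsub>R\<^esub> (y \<otimes>\<^bsub>R\<^esub> z)) \<and>
     (\<forall>x\<in>carrier R. \<forall>y\<in>carrier R. \<forall>z\<in>carrier R.
        (x \<oplus>\<^bsub>R\<^esub> y) \<otimes>\<^bsub>R\<^esub> z = x \<otimes>\<^bsub>R\<^esub> z \<oplus>\<^bsub>R\<^esub> y \<otimes>\<^bsub>R\<^esub> z) \<and>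
     (\<forall>x\<in>carrier R. \<forall>y\<in>carrier R. \<forall>z\<in>carrier R.
        z \<otimes>\<^bsub>R\<^esub> (x \<oplus>\<^bsub>R\<^esub> y) = z \<otimes>\<^bsub>R\<^esub> x \<oplus>\<^bsub>R\<^esub> z \<otimes>\<^bsub>R\<^esub> y)"

definition rng_hom :: "('a, 'c) ring_scheme \<Rightarrow> ('b, 'd) ring_scheme \<Rightarrow> ('a \<Rightarrow> 'b) set" where
  "rng_hom R S = {h. h \<in> carrier R \<rightarrow> carrier S \<and>
     (\<forall>x\<in>carrier R. \<forall>y\<in>carrier R. h (x \<oplus>\<^bsub>R\<^esub> y) = h x \<oplus>\<^bsub>S\<^esub> h y) \<and>
     (\<forall>x\<in>carrier R. \<forall>y\<in>carrier R. h (x \<otimes>\<^bsub>R\<^esub> y) = h x \<otimes>\<^bsub>S\<^esub> h y)}"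

definition conj_act :: "('g, 'a) monoid_scheme \<Rightarrow> ('n, 'b) monoid_scheme \<Rightarrow> ('n \<Rightarrow> 'g) \<Rightarrow> 'g \<Rightarrow> 'n \<Rightarrow> 'n" where
  "conj_act G N i x n = (THE m. m \<in> carrier N \<and> i m = x \<otimes>\<^bsub>G\<^esub> i n \<otimes>\<^bsub>G\<^esub> inv\<^bsub>G\<^esub> x)"

definition Z1 :: "('g, 'a) monoid_scheme \<Rightarrow> ('n, 'b) monoid_scheme \<Rightarrow> ('n \<Rightarrow> 'g) \<Rightarrow> ('g \<Rightarrow> 'n) set" where
  "Z1 G N i = {\<phi>. \<phi> \<in> carrier G \<rightarrow>\<^sub>E carrier N \<and>
      (\<forall>x\<in>carrier G. \<forall>y\<in>carrier G.
         \<phi> (x \<otimes>\<^bsub>G\<^esub> y) = \<phi> x \<otimes>\<^bsub>N\<^esub> conj_act G N i x (\<phi> y))}"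

definition Z1_ring :: "('g, 'a) monoid_scheme \<Rightarrow> ('n, 'b) monoid_scheme \<Rightarrow> ('n \<Rightarrow> 'g) \<Rightarrow> ('g \<Rightarrow> 'n) ring" where
  "Z1_ring G N i = \<lparr> carrier = Z1 G N i,
      mult = (\<lambda>\<phi> \<psi>. \<lambda>x\<in>carrier G. \<phi> (i (\<psi> x))),
      one = undefined,
      zero = (\<lambda>x\<in>carrier G. \<one>\<^bsub>N\<^esub>),
      add = (\<lambda>\<phi> \<psi>. \<lambda>x\<in>carrier G. \<phi> x \<otimes>\<^bsub>N\<^esub> \<psi> x) \<rparr>"

definition Q_act :: "('g, 'a) monoid_scheme \<Rightarrow> ('n, 'b) monoid_scheme \<Rightarrow> ('n \<Rightarrow> 'g) \<Rightarrow> ('g \<Rightarrow> 'q) \<Rightarrow> 'q \<Rightarrow> 'n \<Rightarrow> 'n" where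
  "Q_act G N i p q n = conj_act G N i (SOME x. x \<in> carrier G \<and> p x = q) n"

definition EndQ :: "('g, 'a) monoid_scheme \<Rightarrow> ('n, 'b) monoid_scheme \<Rightarrow> ('q, 'c) monoid_scheme \<Rightarrow> ('n \<Rightarrow> 'g) \<Rightarrow> ('g \<Rightarrow> 'q) \<Rightarrow> ('n \<Rightarrow> 'n) set" where
  "EndQ G N Q i p = {f. f \<in> hom N N \<and> f \<in> extensional (carrier N) \<and>
      (\<forall>q\<in>carrier Q. \<forall>n\<in>carrier N. f (Q_act G N i p q n) = Q_act G N i p q (f n))}"

definition EndQ_ring :: "('g, 'a) monoid_scheme \<Rightarrow> ('n, 'b) monoid_scheme \<Rightarrow> ('q, 'c) monoid_scheme \<Rightarrow> ('n \<Rightarrow> 'g) \<Rightarrow> ('g \<Rightarrow> 'q) \<Rightarrow> ('n \<Rightarrow> 'n) ring" where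
  "EndQ_ring G N Q i p = \<lparr> carrier = EndQ G N Q i p,
      mult = (\<lambda>f g. \<lambda>n\<in>carrier N. f (g n)),
      one = (\<lambda>n\<in>carrier N. n),
      zero = (\<lambda>n\<in>carrier N. \<one>\<^bsub>N\<^esub>),
      add = (\<lambda>f g. \<lambda>n\<in>carrier N. f n \<otimes>\<^bsub>N\<^esub> g n) \<rparr>"

definition Res :: "('n, 'b) monoid_scheme \<Rightarrow> ('n \<Rightarrow> 'g) \<Rightarrow> ('g \<Rightarrow> 'n) \<Rightarrow> ('n \<Rightarrow> 'n)" where
  "Res N i \<phi> = (\<lambda>n\<in>carrier N. \<phi> (i n))"

end

theory Submission
  imports Defs
begin

locale ext_setup =
  fixes G :: "('g, 'a) monoid_scheme" and N :: "('n, 'b) monoid_scheme" and i :: "'n \<Rightarrow> 'g"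
  assumes grpG: "group G" and cN: "comm_group N" and ihom: "i \<in> hom N G"
    and iinj: "inj_on i (carrier N)"
    and norm: "\<And>x n. x \<in> carrier G \<Longrightarrow> n \<in> carrier N \<Longrightarrow>
        x \<otimes>\<^bsub>G\<^esub> i n \<otimes>\<^bsub>G\<^esub> inv\<^bsub>G\<^esub> x \<in> i ` carrier N"
begin

interpretation G: group G by (rule grpG)
interpretation N: comm_group N by (rule cN)
interpretation h: group_hom N G i by (simp add: group_hom_def group_hom_axioms_def cN N.is_group grpG ihom)

lemma i_closed[simp]: "n \<in> carrier N \<Longrightarrow> i n \<in> carrier G"
  using ihom by (auto simp: hom_def)

lemma i_mult: "a \<in> carrier N \<Longrightarrow> b \<in> carrier N \<Longrightarrow> i (a \<otimes>\<^bsub>N\<^esub> b) = i a \<otimes>\<^bsub>G\<^esub> i b"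
  using ihom by (simp add: hom_def)

lemma i_eq: "a \<in> carrier N \<Longrightarrow> b \<in> carrier N \<Longrightarrow> i a = i b \<Longrightarrow> a = b"
  using iinj by (auto simp: inj_on_def)

lemma conj_props:
  assumes "x \<in> carrier G" "n \<in> carrier N"
  shows "conj_act G N i x n \<in> carrier N \<and> i (conj_act G N i x n) = x \<otimes>\<^bsub>G\<^esub> i n \<otimes>\<^bsub>G\<^esub> inv\<^bsub>G\<^esub> x"
proof -
  have ex: "\<exists>!m. m \<in> carrier N \<and> i m = x \<otimes>\<^bsub>G\<^esub> i n \<otimes>\<^bsub>G\<^esub> inv\<^bsub>G\<^esub> x"
  proof -
    obtain m where m: "m \<in> carrier N" "x \<otimes>\<^bsub>G\<^esub> i n \<otimes>\<^bsub>G\<^esub> inv\<^bsub>G\<^esub> x = i m"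
      using norm[OF assms] by (auto elim!: imageE)
    show ?thesis
    proof (rule ex1I[of _ m])
      show "m \<in> carrier N \<and> i m = x \<otimes>\<^bsub>G\<^esub> i n \<otimes>\<^bsub>G\<^esub> inv\<^bsub>G\<^esub> x" using m by simp
    next
      fix y assume "y \<in> carrier N \<and> i y = x \<otimes>\<^bsub>G\<^esub> i n \<otimes>\<^bsub>G\<^esub> inv\<^bsub>G\<^esub> x"
      then show "y = m" using m i_eq by metis
    qed
  qed
  show ?thesis unfolding conj_act_def by (rule theI'[OF ex])
qed

lemma conj_closed[simp]: "x \<in> carrier G \<Longrightarrow> n \<in> carrier N \<Longrightarrow> conj_act G N i x n \<in> carrier N"
  using conj_props by blast

lemma conj_i: "x \<in> carrier G \<Longrightarrow> n \<in> carrier N \<Longrightarrow> i (conj_act G N i x n) = x \<otimes>\<^bsub>G\<^esub> i n \<otimes>\<^bsub>G\<^esub> inv\<^bsub>G\<^esub> x"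
  using conj_props by blast

lemma conj_eqI: "x \<in> carrier G \<Longrightarrow> n \<in> carrier N \<Longrightarrow> m \<in> carrier N \<Longrightarrow>
   i m = x \<otimes>\<^bsub>G\<^esub> i n \<otimes>\<^bsub>G\<^esub> inv\<^bsub>G\<^esub> x \<Longrightarrow> conj_act G N i x n = m"
  using conj_props i_eq by metis

lemma conj_mult: assumes "x \<in> carrier G" "a \<in> carrier N" "b \<in> carrier N"
  shows "conj_act G N i x (a \<otimes>\<^bsub>N\<^esub> b) = conj_act G N i x a \<otimes>\<^bsub>N\<^esub> conj_act G N i x b"
proof (rule conj_eqI)
  have "x \<otimes>\<^bsub>G\<^esub> i a \<otimes>\<^bsub>G\<^esub> inv\<^bsub>G\<^esub> x \<otimes>\<^bsub>G\<^esub> (x \<otimes>\<^bsub>G\<^esub> i b \<otimes>\<^bsub>G\<^esub> inv\<^bsub>G\<^esub> x)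
     = x \<otimes>\<^bsub>G\<^esub> (i a \<otimes>\<^bsub>G\<^esub> i b) \<otimes>\<^bsub>G\<^esub> inv\<^bsub>G\<^esub> x"
    using assms by (simp add: G.m_assoc G.inv_solve_left')
  then show "i (conj_act G N i x a \<otimes>\<^bsub>N\<^esub> conj_act G N i x b) = x \<otimes>\<^bsub>G\<^esub> i (a \<otimes>\<^bsub>N\<^esub> b) \<otimes>\<^bsub>G\<^esub> inv\<^bsub>G\<^esub> x"
    using assms by (simp add: i_mult conj_i)
qed (use assms in auto)

lemma conj_one: assumes "x \<in> carrier G" shows "conj_act G N i x \<one>\<^bsub>N\<^esub> = \<one>\<^bsub>N\<^esub>"
proof -
  have "conj_act G N i x \<one>\<^bsub>N\<^esub> = conj_act G N i x \<one>\<^bsub>N\<^esub> \<otimes>\<^bsub>N\<^esub> conj_act G N i x \<one>\<^bsub>N\<^esub>"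
    using conj_mult[OF assms, of "\<one>\<^bsub>N\<^esub>" "\<one>\<^bsub>N\<^esub>"] by simp
  then show ?thesis using assms by (metis N.l_cancel_one N.one_closed conj_closed)
qed

lemma conj_inv: assumes "x \<in> carrier G" "a \<in> carrier N"
  shows "conj_act G N i x (inv\<^bsub>N\<^esub> a) = inv\<^bsub>N\<^esub> conj_act G N i x a"
proof -
  have "conj_act G N i x (inv\<^bsub>N\<^esub> a) \<otimes>\<^bsub>N\<^esub> conj_act G N i x a = \<one>\<^bsub>N\<^esub>"
    using conj_mult[OF assms(1), of "inv\<^bsub>N\<^esub> a" a] assms by (simp add: conj_one)
  then show ?thesis using assms by (simp add: N.inv_equality)
qed

lemma conj_iN: assumes "a \<in> carrier N" "m \<in> carrier N"
  shows "conj_act G N i (i a) m = m"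
proof (rule conj_eqI)
  have "i a \<otimes>\<^bsub>G\<^esub> i m = i m \<otimes>\<^bsub>G\<^esub> i a" using assms i_mult N.m_comm by metis
  then have "i a \<otimes>\<^bsub>G\<^esub> i m \<otimes>\<^bsub>G\<^esub> inv\<^bsub>G\<^esub> i a = i m \<otimes>\<^bsub>G\<^esub> i a \<otimes>\<^bsub>G\<^esub> inv\<^bsub>G\<^esub> i a"
    by (rule arg_cong[where f="\<lambda>z. z \<otimes>\<^bsub>G\<^esub> inv\<^bsub>G\<^esub> i a"])
  also have "\<dots> = i m" using assms by (simp add: G.m_assoc)
  finally show "i m = i a \<otimes>\<^bsub>G\<^esub> i m \<otimes>\<^bsub>G\<^esub> inv\<^bsub>G\<^esub> i a" by simp
qed (use assms in auto)

lemma swap: assumes "x \<in> carrier G" "n \<in> carrier N"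
  shows "x \<otimes>\<^bsub>G\<^esub> i n = i (conj_act G N i x n) \<otimes>\<^bsub>G\<^esub> x"
  using assms by (simp add: conj_i G.m_assoc)

lemma crossedD:
  assumes "\<phi> \<in> Z1 G N i" shows "\<And>x. x \<in> carrier G \<Longrightarrow> \<phi> x \<in> carrier N"
    and "\<phi> \<in> extensional (carrier G)"
    and "\<And>x y. x \<in> carrier G \<Longrightarrow> y \<in> carrier G \<Longrightarrow> \<phi> (x \<otimes>\<^bsub>G\<^esub> y) = \<phi> x \<otimes>\<^bsub>N\<^esub> conj_act G N i x (\<phi> y)"
  using assms by (auto simp: Z1_def PiE_def)

lemma res_mult: assumes "\<phi> \<in> Z1 G N i" "a \<in> carrier N" "b \<in> carrier N"
  shows "\<phi> (i (a \<otimes>\<^bsub>N\<^esub> b)) = \<phi> (i a) \<otimes>\<^bsub>N\<^esub> \<phi> (i b)"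
  using assms by (simp add: i_mult crossedD conj_iN)

lemma res_equiv: assumes "\<phi> \<in> Z1 G N i" "x \<in> carrier G" "n \<in> carrier N"
  shows "\<phi> (i (conj_act G N i x n)) = conj_act G N i x (\<phi> (i n))"
proof -
  have "\<phi> (x \<otimes>\<^bsub>G\<^esub> i n) = \<phi> x \<otimes>\<^bsub>N\<^esub> conj_act G N i x (\<phi> (i n))"
    using assms by (simp add: crossedD)
  moreover have "\<phi> (x \<otimes>\<^bsub>G\<^esub> i n) = \<phi> (i (conj_act G N i x n)) \<otimes>\<^bsub>N\<^esub> \<phi> x"
    using assms by (simp add: swap crossedD conj_iN)
  ultimately have "\<phi> (i (conj_act G N i x n)) \<otimes>\<^bsub>N\<^esub> \<phi> x = conj_act G N i x (\<phi> (i n)) \<otimes>\<^bsub>N\<^esub> \<phi> x"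
    using assms by (metis N.m_comm conj_closed crossedD(1) i_closed)
  then show ?thesis using assms by (simp add: crossedD)
qed

lemma Z1I:
  assumes "\<phi> \<in> carrier G \<rightarrow>\<^sub>E carrier N"
    "\<And>x y. x \<in> carrier G \<Longrightarrow> y \<in> carrier G \<Longrightarrow> \<phi> (x \<otimes>\<^bsub>G\<^esub> y) = \<phi> x \<otimes>\<^bsub>N\<^esub> conj_act G N i x (\<phi> y)"
  shows "\<phi> \<in> Z1 G N i"
  using assms by (simp add: Z1_def)

lemma add_closed: assumes "\<phi> \<in> Z1 G N i" "\<psi> \<in> Z1 G N i"
  shows "(\<lambda>x\<in>carrier G. \<phi> x \<otimes>\<^bsub>N\<^esub> \<psi> x) \<in> Z1 G N i"
proof (rule Z1I)
  show "(\<lambda>x\<in>carrier G. \<phi> x \<otimes>\<^bsub>N\<^esub> \<psi> x) \<in> carrier G \<rightarrow>\<^sub>E carrier N"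
    using assms by (auto simp: crossedD)
  fix x y assume xy: "x \<in> carrier G" "y \<in> carrier G"
  then show "(\<lambda>x\<in>carrier G. \<phi> x \<otimes>\<^bsub>N\<^esub> \<psi> x) (x \<otimes>\<^bsub>G\<^esub> y) =
    (\<lambda>x\<in>carrier G. \<phi> x \<otimes>\<^bsub>N\<^esub> \<psi> x) x \<otimes>\<^bsub>N\<^esub> conj_act G N i x ((\<lambda>x\<in>carrier G. \<phi> x \<otimes>\<^bsub>N\<^esub> \<psi> x) y)"
    using assms by (simp add: crossedD conj_mult N.m_ac)
qed

lemma zero_closed: "(\<lambda>x\<in>carrier G. \<one>\<^bsub>N\<^esub>) \<in> Z1 G N i"
  by (rule Z1I) (auto simp: conj_one)

lemma neg_closed: assumes "\<phi> \<in> Z1 G N i"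
  shows "(\<lambda>x\<in>carrier G. inv\<^bsub>N\<^esub> \<phi> x) \<in> Z1 G N i"
proof (rule Z1I)
  show "(\<lambda>x\<in>carrier G. inv\<^bsub>N\<^esub> \<phi> x) \<in> carrier G \<rightarrow>\<^sub>E carrier N"
    using assms by (auto simp: crossedD)
  fix x y assume xy: "x \<in> carrier G" "y \<in> carrier G"
  then show "(\<lambda>x\<in>carrier G. inv\<^bsub>N\<^esub> \<phi> x) (x \<otimes>\<^bsub>G\<^esub> y) =
    (\<lambda>x\<in>carrier G. inv\<^bsub>N\<^esub> \<phi> x) x \<otimes>\<^bsub>N\<^esub> conj_act G N i x ((\<lambda>x\<in>carrier G. inv\<^bsub>N\<^esub> \<phi> x) y)"
    using assms by (simp add: crossedD conj_inv N.inv_mult N.m_ac)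
qed

lemma mult_closed: assumes "\<phi> \<in> Z1 G N i" "\<psi> \<in> Z1 G N i"
  shows "(\<lambda>x\<in>carrier G. \<phi> (i (\<psi> x))) \<in> Z1 G N i"
proof (rule Z1I)
  show "(\<lambda>x\<in>carrier G. \<phi> (i (\<psi> x))) \<in> carrier G \<rightarrow>\<^sub>E carrier N"
    using assms by (auto simp: crossedD)
  fix x y assume xy: "x \<in> carrier G" "y \<in> carrier G"
  then show "(\<lambda>x\<in>carrier G. \<phi> (i (\<psi> x))) (x \<otimes>\<^bsub>G\<^esub> y) =
    (\<lambda>x\<in>carrier G. \<phi> (i (\<psi> x))) x \<otimes>\<^bsub>N\<^esub> conj_act G N i x ((\<lambda>x\<in>carrier G. \<phi> (i (\<psi> x))) y)"
    using assms by (simp add: crossedD res_mult res_equiv conj_iN)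
qed

lemma ext_eq: "\<phi> \<in> Z1 G N i \<Longrightarrow> \<psi> \<in> Z1 G N i \<Longrightarrow> (\<And>x. x \<in> carrier G \<Longrightarrow> \<phi> x = \<psi> x) \<Longrightarrow> \<phi> = \<psi>"
  using crossedD(2) extensionalityI by metis

lemma Z1_rng: "rng (Z1_ring G N i)"
proof -
  have ab: "abelian_group (Z1_ring G N i)"
  proof (rule abelian_groupI, simp_all add: Z1_ring_def add_closed zero_closed)
    fix x y z assume a: "x \<in> Z1 G N i" "y \<in> Z1 G N i" "z \<in> Z1 G N i"
    show "(\<lambda>xa\<in>carrier G. (if xa \<in> carrier G then x xa \<otimes>\<^bsub>N\<^esub> y xa else undefined) \<otimes>\<^bsub>N\<^esub> z xa) =
          (\<lambda>xa\<in>carrier G. x xa \<otimes>\<^bsub>N\<^esub> (if xa \<in> carrier G then y xa \<otimes>\<^bsub>N\<^esub> z xa else undefined))"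
      using a by (auto simp: crossedD N.m_assoc)
  next
    fix x y assume a: "x \<in> Z1 G N i" "y \<in> Z1 G N i"
    show "(\<lambda>xa\<in>carrier G. x xa \<otimes>\<^bsub>N\<^esub> y xa) = (\<lambda>xa\<in>carrier G. y xa \<otimes>\<^bsub>N\<^esub> x xa)"
      using a by (auto simp: crossedD N.m_comm)
  next
    fix x assume a: "x \<in> Z1 G N i"
    show "(\<lambda>xa\<in>carrier G. (if xa \<in> carrier G then \<one>\<^bsub>N\<^esub> else undefined) \<otimes>\<^bsub>N\<^esub> x xa) = x"
      using a crossedD[OF a] by (auto simp: extensional_def)
  next
    fix x assume a: "x \<in> Z1 G N i"
    show "\<exists>y\<in>Z1 G N i. (\<lambda>xa\<in>carrier G. y xa \<otimes>\<^bsub>N\<^esub> x xa) = (\<lambda>x\<in>carrier G. \<one>\<^bsub>N\<^esub>)"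
      by (rule bexI[OF _ neg_closed[OF a]]) (auto simp: crossedD[OF a])
  qed
  show ?thesis unfolding rng_def
  proof (intro conjI ab ballI)
    fix x y assume "x \<in> carrier (Z1_ring G N i)" "y \<in> carrier (Z1_ring G N i)"
    then show "x \<otimes>\<^bsub>Z1_ring G N i\<^esub> y \<in> carrier (Z1_ring G N i)"
      by (simp add: Z1_ring_def mult_closed)
  next
    fix x y z assume a: "x \<in> carrier (Z1_ring G N i)" "y \<in> carrier (Z1_ring G N i)" "z \<in> carrier (Z1_ring G N i)"
    then show "x \<otimes>\<^bsub>Z1_ring G N i\<^esub> y \<otimes>\<^bsub>Z1_ring G N i\<^esub> z = x \<otimes>\<^bsub>Z1_ring G N i\<^esub> (y \<otimes>\<^bsub>Z1_ring G N i\<^esub> z)"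
      by (auto simp: Z1_ring_def crossedD)
  next
    fix x y z assume a: "x \<in> carrier (Z1_ring G N i)" "y \<in> carrier (Z1_ring G N i)" "z \<in> carrier (Z1_ring G N i)"
    then show "(x \<oplus>\<^bsub>Z1_ring G N i\<^esub> y) \<otimes>\<^bsub>Z1_ring G N i\<^esub> z = x \<otimes>\<^bsub>Z1_ring G N i\<^esub> z \<oplus>\<^bsub>Z1_ring G N i\<^esub> y \<otimes>\<^bsub>Z1_ring G N i\<^esub> z"
      by (auto simp: Z1_ring_def crossedD)
  next
    fix x y z assume a: "x \<in> carrier (Z1_ring G N i)" "y \<in> carrier (Z1_ring G N i)" "z \<in> carrier (Z1_ring G N i)"
    then show "z \<otimes>\<^bsub>Z1_ring G N i\<^esub> (x \<oplus>\<^bsub>Z1_ring G N i\<^esub> y) = z \<otimes>\<^bsub>Z1_ring G N i\<^esub> x \<oplus>\<^bsub>Z1_ring G N i\<^esub> z \<otimes>\<^bsub>Z1_ring G N i\<^esub> y"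
      by (auto simp: Z1_ring_def crossedD res_mult conj_iN intro!: restrict_ext)
  qed
qed

lemma Res_hom: "\<phi> \<in> Z1 G N i \<Longrightarrow> Res N i \<phi> \<in> hom N N"
  by (auto simp: hom_def Res_def crossedD res_mult conj_iN)

end

theorem lemma7:
  fixes G :: "('g, 'a) monoid_scheme" and N :: "('n, 'b) monoid_scheme"
    and Q :: "('q, 'c) monoid_scheme"
    and i :: "'n \<Rightarrow> 'g" and p :: "'g \<Rightarrow> 'q"
  assumes "group G" and "comm_group N" and "group Q"
    and "i \<in> hom N G" and "inj_on i (carrier N)"
    and "p \<in> hom G Q" and "p ` carrier G = carrier Q"
    and "kernel G Q p = i ` carrier N"
  shows "rng (Z1_ring G N i) \<and> Res N i \<in> rng_hom (Z1_ring G N i) (EndQ_ring G N Q i p)"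
proof -
  interpret G: group G by (rule assms(1))
  interpret N: comm_group N by (rule assms(2))
  interpret Q: group Q by (rule assms(3))
  interpret pQ: group_hom G Q p
    by (simp add: group_hom_def group_hom_axioms_def assms)
  have norm: "x \<otimes>\<^bsub>G\<^esub> i n \<otimes>\<^bsub>G\<^esub> inv\<^bsub>G\<^esub> x \<in> i ` carrier N"
    if x: "x \<in> carrier G" and n: "n \<in> carrier N" for x n
  proof -
    have ik: "i n \<in> kernel G Q p" using assms(8) n by auto
    then have iG: "i n \<in> carrier G" and p1: "p (i n) = \<one>\<^bsub>Q\<^esub>" by (auto simp: kernel_def)
    have "p (x \<otimes>\<^bsub>G\<^esub> i n \<otimes>\<^bsub>G\<^esub> inv\<^bsub>G\<^esub> x) = p x \<otimes>\<^bsub>Q\<^esub> p (i n) \<otimes>\<^bsub>Q\<^esub> inv\<^bsub>Q\<^esub> p x"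
      using x iG by (simp add: pQ.hom_mult pQ.hom_inv)
    also have "\<dots> = \<one>\<^bsub>Q\<^esub>" using x by (simp add: p1)
    finally have "x \<otimes>\<^bsub>G\<^esub> i n \<otimes>\<^bsub>G\<^esub> inv\<^bsub>G\<^esub> x \<in> kernel G Q p"
      using x iG by (simp add: kernel_def)
    then show ?thesis using assms(8) by simp
  qed
  interpret E: ext_setup G N i
    by (unfold_locales) (use assms norm in auto)
  have ResE: "Res N i \<phi> \<in> EndQ G N Q i p" if ph: "\<phi> \<in> Z1 G N i" for \<phi>
    unfolding EndQ_def
  proof (intro CollectI conjI ballI)
    show "Res N i \<phi> \<in> hom N N" by (rule E.Res_hom[OF ph])
    show "Res N i \<phi> \<in> extensional (carrier N)" by (simp add: Res_def)
    fix q n assume q: "q \<in> carrier Q" and n: "n \<in> carrier N"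
    define x where "x = (SOME x. x \<in> carrier G \<and> p x = q)"
    have "\<exists>x. x \<in> carrier G \<and> p x = q" using q assms(7) by (metis imageE)
    then have x: "x \<in> carrier G" unfolding x_def by (rule someI2_ex) simp
    show "Res N i \<phi> (Q_act G N i p q n) = Q_act G N i p q (Res N i \<phi> n)"
      unfolding Q_act_def x_def[symmetric] using x n ph
      by (simp add: Res_def E.res_equiv E.crossedD)
  qed
  show ?thesis
  proof (intro conjI E.Z1_rng)
    show "Res N i \<in> rng_hom (Z1_ring G N i) (EndQ_ring G N Q i p)"
      unfolding rng_hom_def
    proof (intro CollectI conjI ballI Pi_I)
      fix \<phi> assume "\<phi> \<in> carrier (Z1_ring G N i)"
      then show "Res N i \<phi> \<in> carrier (EndQ_ring G N Q i p)"
        by (simp add: Z1_ring_def EndQ_ring_def ResE)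
    next
      fix \<phi> \<psi> assume "\<phi> \<in> carrier (Z1_ring G N i)" "\<psi> \<in> carrier (Z1_ring G N i)"
      then show "Res N i (\<phi> \<oplus>\<^bsub>Z1_ring G N i\<^esub> \<psi>) = Res N i \<phi> \<oplus>\<^bsub>EndQ_ring G N Q i p\<^esub> Res N i \<psi>"
        by (auto simp: Z1_ring_def EndQ_ring_def Res_def E.crossedD intro!: restrict_ext)
    next
      fix \<phi> \<psi> assume "\<phi> \<in> carrier (Z1_ring G N i)" "\<psi> \<in> carrier (Z1_ring G N i)"
      then show "Res N i (\<phi> \<otimes>\<^bsub>Z1_ring G N i\<^esub> \<psi>) = Res N i \<phi> \<otimes>\<^bsub>EndQ_ring G N Q i p\<^esub> Res N i \<psi>"
        by (auto simp: Z1_ring_def EndQ_ring_def Res_def E.crossedD intro!: restrict_ext)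
    qed
  qed
qed

end
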